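(* Let $N_1, N_2$ be positive integers and consider the Markov chain $(Z^{(t)})_{t\ge 0}$ on $[0,1]$ defined by $Z^{(t)} = B_1^{(t)} (1 - B_2^{(t)}) Z^{(t-1)} + B_2^{(t)}$ for $t \geq 1$, where $B_1^{(t)} \sim \operatorname{Beta}(N_1,1)$ and $B_2^{(t)}\sim\operatorname{Beta}(1,N_2)$, $t=1,2,\dots$, are all mutually independent and independent of $Z^{(0)}$. Let $P$ be its transition kernel and let $\pi = \operatorname{Beta}(N_1+1, N_2)$ (the stationary distribution of $P$). Then for every integer $t \ge 0$, \[\sup_{z\in[0,1]}\mathcal W_1 (P^t(z, \cdot), \pi) = \frac{\max\{N_1+1, N_2\}}{N_1 + N_2 + 1} \bigg(\frac{N_1 N_2 }{(N_1 +1)(N_2 + 1)}\bigg)^t.\]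
   Context: $\operatorname{Beta}(a,b)$ denotes the Beta distribution on $[0,1]$ with density proportional to $x^{a-1}(1-x)^{b-1}$. $\mathcal W_1$ denotes the Wasserstein-1 distance between probability measures on $[0,1]$ (with the usual metric $|x-y|$). $P^t(z,\cdot)$ is the law of $Z^{(t)}$ when $Z^{(0)} = z$. *)

theory Defs
  imports "HOL-Probability.Probability"
begin

definition beta_density :: "real \<Rightarrow> real \<Rightarrow> real \<Rightarrow> real" where
  "beta_density a b x =
     indicator {0<..<1} x * (x powr (a - 1) * (1 - x) powr (b - 1)) / Beta a b"

definition beta_measure :: "real \<Rightarrow> real \<Rightarrow> real measure" where
  "beta_measure a b = density lborel (\<lambda>x. ennreal (beta_density a b x))"

definition innov :: "nat \<Rightarrow> nat \<Rightarrow> (real \<times> real) measure" where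
  "innov N1 N2 = beta_measure (real N1) 1 \<Otimes>\<^sub>M beta_measure 1 (real N2)"

fun chain :: "real \<Rightarrow> nat \<Rightarrow> (nat \<Rightarrow> real \<times> real) \<Rightarrow> real" where
  "chain z 0 \<omega> = z"
| "chain z (Suc t) \<omega> =
     fst (\<omega> (Suc t)) * (1 - snd (\<omega> (Suc t))) * chain z t \<omega> + snd (\<omega> (Suc t))"

definition Pt :: "nat \<Rightarrow> nat \<Rightarrow> nat \<Rightarrow> real \<Rightarrow> real measure" where
  "Pt N1 N2 t z = distr (PiM {1..t} (\<lambda>_. innov N1 N2)) borel (chain z t)"

definition couplings :: "real measure \<Rightarrow> real measure \<Rightarrow> (real \<times> real) measure set" where
  "couplings \<mu> \<nu> = {\<gamma>. sets \<gamma> = sets (borel \<Otimes>\<^sub>M borel) \<and>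
                        distr \<gamma> borel fst = \<mu> \<and> distr \<gamma> borel snd = \<nu>}"

definition W1 :: "real measure \<Rightarrow> real measure \<Rightarrow> real" where
  "W1 \<mu> \<nu> = (INF \<gamma> \<in> couplings \<mu> \<nu>. \<integral>p. \<bar>fst p - snd p\<bar> \<partial>\<gamma>)"

end

theory Submission
  imports Defs
begin


lemma Beta_pos: "a > 0 \<Longrightarrow> b > 0 \<Longrightarrow> Beta a b > (0::real)"
  by (simp add: Beta_def Gamma_real_pos)

lemma beta_density_nonneg: "a > 0 \<Longrightarrow> b > 0 \<Longrightarrow> beta_density a b x \<ge> 0"
  using Beta_pos[of a b] by (auto simp: beta_density_def indicator_def)

lemma beta_density_meas[measurable]: "beta_density a b \<in> borel_measurable borel"
  unfolding beta_density_def by measurable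

lemma sets_beta[simp, measurable_cong]: "sets (beta_measure a b) = sets borel"
  by (simp add: beta_measure_def)

lemma space_beta[simp]: "space (beta_measure a b) = UNIV"
  by (simp add: beta_measure_def)

lemma AE_lborel_finite: "finite S \<Longrightarrow> AE x in lborel. (x::real) \<notin> S"
proof (induction S rule: finite_induct)
  case (insert y S) from AE_lborel_singleton[of y] insert.IH show ?case by eventually_elim auto
qed auto

lemma nn_integral_interval:
  fixes f :: "real \<Rightarrow> real"
  assumes "(f has_integral I) {lo..hi}" "\<And>x. x \<in> {lo..hi} \<Longrightarrow> 0 \<le> f x"
    and "finite S" and "\<And>x. x \<notin> S \<Longrightarrow> g x = ennreal (f x) * indicator {lo..hi} x"
  shows "integral\<^sup>N lborel g = ennreal I"
proof -
  have "integral\<^sup>N lborel g = (\<integral>\<^sup>+x. ennreal (f x) * indicator {lo..hi} x \<partial>lborel)"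
    using AE_lborel_finite[OF assms(3)] by (intro nn_integral_cong_AE) (auto elim!: eventually_mono simp: assms(4))
  also have "\<dots> = ennreal I" by (rule nn_integral_has_integral_lebesgue') (use assms in auto)
  finally show ?thesis .
qed

lemma nn_integral_beta: assumes [measurable]: "g \<in> borel_measurable borel" shows
  "(\<integral>\<^sup>+x. g x \<partial>beta_measure a b) = (\<integral>\<^sup>+x. ennreal (beta_density a b x) * g x \<partial>lborel)"
  unfolding beta_measure_def by (rule nn_integral_density) measurable

lemma prob_space_beta: assumes "a > 0" "b > 0" shows "prob_space (beta_measure a b)"
proof
  have "emeasure (beta_measure a b) (space (beta_measure a b)) = (\<integral>\<^sup>+x. ennreal (beta_density a b x) \<partial>lborel)"
    by (simp add: beta_measure_def emeasure_density)
  also have "\<dots> = ennreal (Beta a b / Beta a b)"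
    apply (rule nn_integral_interval[where S="{0,1}" and lo=0 and hi=1 and f="\<lambda>x. x powr (a - 1) * (1 - x) powr (b - 1) / Beta a b"])
    using has_integral_divide[OF has_integral_Beta_real[OF assms], of "Beta a b"] Beta_pos[OF assms]
    by (auto simp: beta_density_def indicator_def)
  finally show "emeasure (beta_measure a b) (space (beta_measure a b)) = 1"
    using Beta_pos[OF assms] by simp
qed

lemma AE_beta: assumes "a > 0" "b > 0" shows "AE x in beta_measure a b. 0 < x \<and> x < 1"
  unfolding beta_measure_def
  by (subst AE_density) (auto simp: beta_density_def indicator_def)

lemma nn_integral_beta_mean: assumes "a > 0" "b > 0"
  shows "(\<integral>\<^sup>+x. ennreal x \<partial>beta_measure a b) = ennreal (a / (a + b))"
proof -
  have B: "Beta a b > 0" using Beta_pos[OF assms] .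
  have eq: "(a + b) * Beta (a + 1) b = a * Beta a b"
    by (rule Beta_plus1_left) (use assms in \<open>auto elim!: nonpos_Ints_cases\<close>)
  have "(\<integral>\<^sup>+x. ennreal x \<partial>beta_measure a b) = ennreal (Beta (a+1) b / Beta a b)"
    apply (subst nn_integral_beta, measurable)
    apply (rule nn_integral_interval[where S="{0,1}" and lo=0 and hi=1 and f="\<lambda>x. x powr (a + 1 - 1) * (1 - x) powr (b - 1) / Beta a b"])
    using has_integral_divide[OF has_integral_Beta_real[of "a+1" b], of "Beta a b"] assms B
    apply (auto simp: beta_density_def indicator_def ennreal_mult[symmetric] powr_diff)
    done
  also have "Beta (a+1) b / Beta a b = a / (a + b)"
    using eq B assms by (auto simp: field_simps)
  finally show ?thesis .
qed



lemma distr_lborel_reflect: "distr lborel borel (\<lambda>x::real. 1 - x) = lborel"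
proof -
  have "distr lborel borel (\<lambda>x::real. 1 - x) = distr (distr lborel borel uminus) borel ((+) (1::real))"
    by (subst distr_distr) (auto simp: comp_def)
  also have "\<dots> = lborel" by (simp add: lborel_distr_uminus lborel_distr_plus)
  finally show ?thesis .
qed

lemma beta_reflect: assumes "a > 0" "b > 0"
  shows "distr (beta_measure a b) borel (\<lambda>x. 1 - x) = beta_measure b a"
proof -
  let ?T = "\<lambda>x::real. 1 - x"
  have "distr (beta_measure a b) borel ?T = distr (density (distr lborel borel ?T) (\<lambda>x. ennreal (beta_density a b x))) lborel ?T"
    unfolding beta_measure_def distr_lborel_reflect by (rule distr_cong) auto
  also have "\<dots> = density lborel ((\<lambda>x. ennreal (beta_density a b x)) \<circ> ?T)"
    by (rule distr_density_distr) auto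
  also have "\<dots> = beta_measure b a"
    unfolding beta_measure_def
    by (rule density_cong) (auto simp: beta_density_def indicator_def Beta_commute[of b a] ac_simps)
  finally show ?thesis .
qed

lemma nn_integral_beta_reflect: assumes "a > 0" "b > 0" and [measurable]: "g \<in> borel_measurable borel"
  shows "(\<integral>\<^sup>+x. g (1 - x) \<partial>beta_measure a b) = (\<integral>\<^sup>+x. g x \<partial>beta_measure b a)"
proof -
  have "(\<integral>\<^sup>+x. g x \<partial>beta_measure b a) = (\<integral>\<^sup>+x. g x \<partial>distr (beta_measure a b) borel (\<lambda>x. 1 - x))"
    using beta_reflect[OF assms(1,2)] by simp
  also have "\<dots> = (\<integral>\<^sup>+x. g (1 - x) \<partial>beta_measure a b)"
    by (subst nn_integral_distr) auto
  finally show ?thesis by simp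
qed

lemma ftc_real:
  fixes f F :: "real \<Rightarrow> real"
  assumes "lo \<le> hi" "\<And>x. x \<in> {lo..hi} \<Longrightarrow> (F has_real_derivative f x) (at x)"
  shows "(f has_integral (F hi - F lo)) {lo..hi}"
  by (rule fundamental_theorem_of_calculus)
     (use assms in \<open>auto simp: has_real_derivative_iff_has_vector_derivative[symmetric] intro: has_field_derivative_at_within\<close>)

lemma Beta_1_right: assumes "x > 0" shows "Beta x 1 = 1 / (x::real)"
proof -
  have "x \<notin> \<int>\<^sub>\<le>\<^sub>0" using assms by (auto elim!: nonpos_Ints_cases)
  moreover have g: "Gamma x \<noteq> 0" using Gamma_real_pos[OF assms] by linarith
  ultimately show ?thesis using Gamma_plus1[of x] assms by (simp add: Beta_def)
qed

lemma powr_nat_m1: "0 < x \<Longrightarrow> x powr (real (Suc n) - 1) = (x::real) ^ n"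
  by (simp add: powr_realpow)

lemma beta_cdf_a1:
  assumes "0 \<le> w"
  shows "emeasure (beta_measure (real (Suc n)) 1) {..w} = ennreal ((min w 1) ^ Suc n)"
proof -
  have "emeasure (beta_measure (real (Suc n)) 1) {..w} = (\<integral>\<^sup>+x. ennreal (beta_density (real (Suc n)) 1 x) * indicator {..w} x \<partial>lborel)"
    unfolding beta_measure_def by (simp add: emeasure_density nn_integral_set_ennreal mult.commute)
  also have "\<dots> = ennreal ((min w 1) ^ Suc n - 0 ^ Suc n)"
  proof (rule nn_integral_interval[where S="{0, min w 1, 1}" and lo=0 and hi="min w 1" and f="\<lambda>x. real (Suc n) * x ^ n"])
    show "((\<lambda>x. real (Suc n) * x ^ n) has_integral (min w 1) ^ Suc n - 0 ^ Suc n) {0..min w 1}"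
      by (rule ftc_real) (use assms DERIV_pow[of "Suc n"] in auto)
    fix x :: real assume "x \<notin> {0, min w 1, 1}"
    then show "ennreal (beta_density (real (Suc n)) 1 x) * indicator {..w} x =
        ennreal (real (Suc n) * x ^ n) * indicator {0..min w 1} x"
      by (auto simp: beta_density_def indicator_def Beta_1_right powr_nat_m1 simp del: of_nat_Suc)
  qed auto
  finally show ?thesis by simp
qed



lemma beta_cdf_nonpos: assumes "w \<le> 0"
  shows "emeasure (beta_measure a b) {..w} = 0"
proof -
  have "emeasure (beta_measure a b) {..w} = (\<integral>\<^sup>+x. ennreal (beta_density a b x) * indicator {..w} x \<partial>lborel)"
    unfolding beta_measure_def by (simp add: emeasure_density nn_integral_set_ennreal mult.commute)
  also have "\<dots> = 0"
  proof -
    have "(\<lambda>x. ennreal (beta_density a b x) * indicator {..w} x) = (\<lambda>x. 0)"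
      using assms by (auto simp: beta_density_def indicator_def)
    then show ?thesis by simp
  qed
  finally show ?thesis .
qed

lemma beta_cdf_ge1: assumes "w \<ge> 1" "a > 0" "b > 0"
  shows "emeasure (beta_measure a b) {..w} = 1"
proof -
  have "emeasure (beta_measure a b) {..w} = (\<integral>\<^sup>+x. ennreal (beta_density a b x) * indicator {..w} x \<partial>lborel)"
    unfolding beta_measure_def by (simp add: emeasure_density nn_integral_set_ennreal mult.commute)
  also have "\<dots> = (\<integral>\<^sup>+x. ennreal (beta_density a b x) * indicator UNIV x \<partial>lborel)"
    by (intro nn_integral_cong) (use assms in \<open>auto simp: beta_density_def indicator_def\<close>)
  also have "\<dots> = emeasure (beta_measure a b) UNIV"
    unfolding beta_measure_def by (simp add: emeasure_density nn_integral_set_ennreal mult.commute)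
  also have "\<dots> = 1" using prob_space.emeasure_space_1[OF prob_space_beta[OF assms(2,3)]] by simp
  finally show ?thesis .
qed

lemma Beta_rel: fixes A C :: real assumes "A > 0" "C > 0"
  shows "C * Beta (A + 1) C = A * Beta A (C + 1)"
proof -
  have nA1: "A \<notin> \<int>\<^sub>\<le>\<^sub>0"
  proof
    assume "A \<in> \<int>\<^sub>\<le>\<^sub>0" then have "A \<le> 0" by (rule nonpos_Ints_nonpos)
    with assms show False by simp
  qed
  have nA2: "C \<notin> \<int>\<^sub>\<le>\<^sub>0"
  proof
    assume "C \<in> \<int>\<^sub>\<le>\<^sub>0" then have "C \<le> 0" by (rule nonpos_Ints_nonpos)
    with assms show False by simp
  qed
  note nA = nA1 nA2
  have 1: "(A + C) * Beta (A + 1) C = A * Beta A C" by (rule Beta_plus1_left[OF nA(1)])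
  have 2: "(A + C) * Beta A (C + 1) = C * Beta A C" by (rule Beta_plus1_right[OF nA(2)])
  have "(A + C) * (C * Beta (A + 1) C) = (A + C) * (A * Beta A (C + 1))"
    using 1 2 by (simp add: algebra_simps)
  then show ?thesis using assms by simp
qed

lemma beta_product:
  fixes a c :: nat
  defines "A \<equiv> real (Suc a)" and "C \<equiv> real (Suc c)"
  shows "distr (beta_measure A 1 \<Otimes>\<^sub>M beta_measure (A + 1) C) borel (\<lambda>p. fst p * snd p)
        = beta_measure A (C + 1)"
proof -
  have A0: "A > 0" and C0: "C > 0" by (auto simp: A_def C_def)
  let ?U = "beta_measure A 1" and ?V = "beta_measure (A + 1) C" and ?T = "beta_measure A (C + 1)"
  interpret U: prob_space ?U by (rule prob_space_beta) (use A0 in auto)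
  interpret V: prob_space ?V by (rule prob_space_beta) (use A0 C0 in auto)
  interpret T: prob_space ?T by (rule prob_space_beta) (use A0 C0 in auto)
  interpret UV: pair_prob_space ?U ?V by unfold_locales
  define B' where "B' = Beta (A + 1) C"
  define B'' where "B'' = Beta A (C + 1)"
  have B'0: "B' > 0" unfolding B'_def by (rule Beta_pos) (use A0 C0 in auto)
  have B''0: "B'' > 0" unfolding B''_def by (rule Beta_pos) (use A0 C0 in auto)
  have rel: "C * B' = A * B''" unfolding B'_def B''_def by (rule Beta_rel[OF A0 C0])
  have aeV: "AE v in ?V. 0 < v \<and> v < 1" by (rule AE_beta) (use A0 C0 in auto)
  have inner: "emeasure ?U ((\<lambda>x. (x, v)) -` ((\<lambda>p. fst p * snd p) -` {..s} \<inter> space (?U \<Otimes>\<^sub>M ?V)))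
      = emeasure ?U {..s / v}" if "v > 0" for v s
  proof -
    have "((\<lambda>x. (x, v)) -` ((\<lambda>p. fst p * snd p) -` {..s} \<inter> space (?U \<Otimes>\<^sub>M ?V))) = {..s / v}"
      using that by (auto simp: space_pair_measure pos_le_divide_eq)
    then show ?thesis by simp
  qed
  have lhs: "emeasure (distr (?U \<Otimes>\<^sub>M ?V) borel (\<lambda>p. fst p * snd p)) {..s} =
      (\<integral>\<^sup>+v. emeasure ?U {..s / v} \<partial>?V)" for s
    apply (subst emeasure_distr, measurable)
    apply (subst UV.emeasure_pair_measure_alt2)
     apply measurable
    apply (rule nn_integral_cong_AE)
    apply (rule eventually_mono[OF aeV])
    apply (rule inner)
    apply simp
    done
  have cdf_eq: "emeasure (distr (?U \<Otimes>\<^sub>M ?V) borel (\<lambda>p. fst p * snd p)) {..s} = emeasure ?T {..s}" for s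
  proof (cases "s < 0")
    case True
    have "(\<integral>\<^sup>+v. emeasure ?U {..s / v} \<partial>?V) = (\<integral>\<^sup>+v. 0 \<partial>?V)"
      apply (rule nn_integral_cong_AE)
      apply (rule eventually_mono[OF aeV])
      using True by (auto intro!: beta_cdf_nonpos simp: divide_nonpos_pos)
    then show ?thesis using True by (simp add: lhs beta_cdf_nonpos)
  next
    case False
    show ?thesis
    proof (cases "s \<ge> 1")
      case True
      have "(\<integral>\<^sup>+v. emeasure ?U {..s / v} \<partial>?V) = (\<integral>\<^sup>+v. 1 \<partial>?V)"
        apply (rule nn_integral_cong_AE)
        apply (rule eventually_mono[OF aeV])
        using True A0 by (auto intro!: beta_cdf_ge1 simp: le_divide_eq)
      then show ?thesis using True A0 C0 V.emeasure_space_1 by (simp add: lhs beta_cdf_ge1)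
    next
      case False2: False
      have s0: "0 \<le> s" "s < 1" using False False2 by auto
      have "(\<integral>\<^sup>+v. emeasure ?U {..s / v} \<partial>?V) = (\<integral>\<^sup>+v. ennreal ((min (s / v) 1) ^ Suc a) \<partial>?V)"
        apply (rule nn_integral_cong_AE)
        apply (rule eventually_mono[OF aeV])
        subgoal for v using s0 beta_cdf_a1[of "s / v" a] by (simp add: A_def del: of_nat_Suc power_Suc)
        done
      also have "\<dots> = (\<integral>\<^sup>+v. ennreal (beta_density (A + 1) C v) * ennreal ((min (s / v) 1) ^ Suc a) \<partial>lborel)"
        by (rule nn_integral_beta) measurable
      also have "\<dots> = (\<integral>\<^sup>+v. ennreal (v ^ Suc a * (1 - v) ^ c / B') * indicator {0..s} v
                          + ennreal (s ^ Suc a * (1 - v) ^ c / B') * indicator {s..1} v \<partial>lborel)"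
      proof (rule nn_integral_cong_AE)
        have "AE v in lborel. v \<notin> {0, s, 1}" by (rule AE_lborel_finite) auto
        then show "AE v in lborel. ennreal (beta_density (A + 1) C v) * ennreal ((min (s / v) 1) ^ Suc a) =
            ennreal (v ^ Suc a * (1 - v) ^ c / B') * indicator {0..s} v
                          + ennreal (s ^ Suc a * (1 - v) ^ c / B') * indicator {s..1} v"
        proof (rule eventually_mono)
          fix v :: real assume v: "v \<notin> {0, s, 1}"
          show "ennreal (beta_density (A + 1) C v) * ennreal ((min (s / v) 1) ^ Suc a) =
            ennreal (v ^ Suc a * (1 - v) ^ c / B') * indicator {0..s} v
                          + ennreal (s ^ Suc a * (1 - v) ^ c / B') * indicator {s..1} v"
          proof (cases "0 < v \<and> v < 1")
            case False
            then show ?thesis using v s0 by (auto simp: beta_density_def indicator_def)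
          next
            case True
            have dens: "beta_density (A + 1) C v = v ^ Suc a * (1 - v) ^ c / B'"
              using True by (simp add: beta_density_def B'_def A_def C_def powr_realpow powr_nat_m1 del: of_nat_Suc)
            show ?thesis
            proof (cases "v < s")
              case True
              then show ?thesis using v s0 \<open>0 < v \<and> v < 1\<close>
                by (auto simp: dens indicator_def min_def le_divide_eq)
            next
              case False
              then have "s < v" using v by auto
              then have "min (s / v) 1 = s / v" using s0 by (auto simp: min_def divide_le_eq)
              moreover have eqr: "v ^ Suc a * (1 - v) ^ c / B' * (s / v) ^ Suc a = s ^ Suc a * (1 - v) ^ c / B'"
                using \<open>0 < v \<and> v < 1\<close> by (simp add: power_divide field_simps del: power_Suc)
              moreover have "ennreal (v ^ Suc a * (1 - v) ^ c / B') * ennreal ((s / v) ^ Suc a) = ennreal (s ^ Suc a * (1 - v) ^ c / B')"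
              proof -
                have nX: "0 \<le> v ^ Suc a * (1 - v) ^ c / B'" using B'0 \<open>0 < v \<and> v < 1\<close> by simp
                have nY: "0 \<le> (s / v) ^ Suc a" using s0 \<open>0 < v \<and> v < 1\<close> by simp
                show ?thesis by (simp only: ennreal_mult[OF nX nY, symmetric] eqr)
              qed
              ultimately show ?thesis using v s0 \<open>s < v\<close> \<open>0 < v \<and> v < 1\<close>
                by (auto simp: dens indicator_def ennreal_mult[symmetric])
            qed
          qed
        qed
      qed
      also have "\<dots> = (\<integral>\<^sup>+v. ennreal (v ^ Suc a * (1 - v) ^ c / B') * indicator {0..s} v \<partial>lborel)
                     + (\<integral>\<^sup>+v. ennreal (s ^ Suc a * (1 - v) ^ c / B') * indicator {s..1} v \<partial>lborel)"
        by (rule nn_integral_add) measurable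
      finally have L: "(\<integral>\<^sup>+v. emeasure ?U {..s / v} \<partial>?V) = 
                 (\<integral>\<^sup>+v. ennreal (v ^ Suc a * (1 - v) ^ c / B') * indicator {0..s} v \<partial>lborel)
                     + (\<integral>\<^sup>+v. ennreal (s ^ Suc a * (1 - v) ^ c / B') * indicator {s..1} v \<partial>lborel)" .
      define p where "p v = v ^ a * (1 - v) ^ Suc c" for v :: real
      define I where "I = integral {0..s} p"
      have hI: "(p has_integral I) {0..s}" unfolding I_def p_def
        by (intro integrable_integral integrable_continuous_interval continuous_intros)
      define G where "G v = v ^ Suc a * (1 - v) ^ Suc c" for v :: real
      have hG: "((\<lambda>v. A * v ^ a * (1 - v) ^ Suc c - C * v ^ Suc a * (1 - v) ^ c) has_integral G s - G 0) {0..s}"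
        unfolding G_def A_def C_def
        by (rule ftc_real) (use s0 in \<open>auto intro!: derivative_eq_intros simp: algebra_simps simp del: power_Suc of_nat_Suc\<close>)
      have h1: "((\<lambda>v. v ^ Suc a * (1 - v) ^ c / B') has_integral ((A / C * I - G s / C) / B')) {0..s}"
      proof -
        have X: "((\<lambda>v. (A / C * p v - (A * v ^ a * (1 - v) ^ Suc c - C * v ^ Suc a * (1 - v) ^ c) / C) / B')
               has_integral ((A / C * I - (G s - G 0) / C) / B')) {0..s}"
          by (intro has_integral_divide has_integral_diff has_integral_mult_right hI hG)
        have fe: "(\<lambda>v. (A / C * p v - (A * v ^ a * (1 - v) ^ Suc c - C * v ^ Suc a * (1 - v) ^ c) / C) / B')
             = (\<lambda>v. v ^ Suc a * (1 - v) ^ c / B')"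
          using C0 by (auto simp: p_def field_simps)
        have g0: "G s - G 0 = G s" by (simp add: G_def)
        show ?thesis using X unfolding fe g0 .
      qed
      have h2: "((\<lambda>v. s ^ Suc a * (1 - v) ^ c / B') has_integral (G s / (C * B'))) {s..1}"
      proof -
        have "((\<lambda>v. s ^ Suc a * (1 - v) ^ c / B') has_integral
             ((- (s ^ Suc a * (1 - 1) ^ Suc c / (C * B'))) - (- (s ^ Suc a * (1 - s) ^ Suc c / (C * B'))))) {s..1}"
          by (rule ftc_real) (use s0 B'0 in \<open>auto intro!: derivative_eq_intros simp: C_def field_simps simp del: of_nat_Suc power_Suc\<close>)
        then show ?thesis by (simp add: G_def)
      qed
      have n1: "0 \<le> (A / C * I - G s / C) / B'"
        by (rule has_integral_nonneg[OF h1]) (use s0 B'0 in auto)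
      have n2: "0 \<le> G s / (C * B')"
        by (rule has_integral_nonneg[OF h2]) (use s0 B'0 in auto)
      have L2: "(\<integral>\<^sup>+v. emeasure ?U {..s / v} \<partial>?V) = ennreal ((A / C * I - G s / C) / B' + G s / (C * B'))"
        unfolding L
        apply (subst nn_integral_interval[OF h1, where S="{}"])
           apply (use s0 B'0 in auto)[3]
        apply (subst nn_integral_interval[OF h2, where S="{}"])
           apply (use s0 B'0 in auto)[3]
        using n1 n2 by (simp add: ennreal_plus)
      have R: "emeasure ?T {..s} = ennreal (I / B'')"
      proof -
        have "emeasure ?T {..s} = (\<integral>\<^sup>+x. ennreal (beta_density A (C + 1) x) * indicator {..s} x \<partial>lborel)"
          unfolding beta_measure_def by (simp add: emeasure_density nn_integral_set_ennreal mult.commute)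
        also have "\<dots> = ennreal (I / B'')"
        proof (rule nn_integral_interval[where S="{0, s, 1}" and lo=0 and hi=s and f="\<lambda>x. p x / B''"])
          show "((\<lambda>x. p x / B'') has_integral I / B'') {0..s}" by (rule has_integral_divide[OF hI])
          fix x :: real assume "x \<notin> {0, s, 1}"
          then show "ennreal (beta_density A (C + 1) x) * indicator {..s} x = ennreal (p x / B'') * indicator {0..s} x"
            using s0 by (auto simp: beta_density_def indicator_def p_def B''_def A_def C_def powr_realpow powr_nat_m1 simp del: of_nat_Suc)
        qed (use B''0 s0 in \<open>auto simp: p_def simp del: power_Suc\<close>)
        finally show ?thesis .
      qed
      have "(A / C * I - G s / C) / B' + G s / (C * B') = I / B''"
        using rel B'0 B''0 C0 A0 by (simp add: field_simps)
      then show ?thesis using L2 R lhs by simp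
    qed
  qed
  show ?thesis
  proof (rule cdf_unique)
    show "real_distribution (distr (?U \<Otimes>\<^sub>M ?V) borel (\<lambda>p. fst p * snd p))"
      unfolding real_distribution_def real_distribution_axioms_def
      by (auto intro!: prob_space.prob_space_distr UV.P.prob_space_axioms)
    show "real_distribution ?T" unfolding real_distribution_def real_distribution_axioms_def
      using T.prob_space_axioms by simp
    show "cdf (distr (?U \<Otimes>\<^sub>M ?V) borel (\<lambda>p. fst p * snd p)) = cdf ?T"
      by (rule ext) (simp add: cdf_def measure_def cdf_eq)
  qed
qed



lemma nn_beta_product:
  fixes a c :: nat
  defines "A \<equiv> real (Suc a)" and "C \<equiv> real (Suc c)"
  assumes [measurable]: "g \<in> borel_measurable borel"
  shows "(\<integral>\<^sup>+u. \<integral>\<^sup>+v. g (u * v) \<partial>beta_measure (A + 1) C \<partial>beta_measure A 1) = (\<integral>\<^sup>+x. g x \<partial>beta_measure A (C + 1))"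
proof -
  have A0: "A > 0" and C0: "C > 0" by (auto simp: A_def C_def)
  interpret U: prob_space "beta_measure A 1" by (rule prob_space_beta) (use A0 in auto)
  interpret V: prob_space "beta_measure (A + 1) C" by (rule prob_space_beta) (use A0 C0 in auto)
  have "(\<integral>\<^sup>+x. g x \<partial>beta_measure A (C + 1)) = (\<integral>\<^sup>+x. g x \<partial>distr (beta_measure A 1 \<Otimes>\<^sub>M beta_measure (A + 1) C) borel (\<lambda>p. fst p * snd p))"
    unfolding A_def C_def by (subst beta_product) (rule refl)
  also have "\<dots> = (\<integral>\<^sup>+p. g (fst p * snd p) \<partial>(beta_measure A 1 \<Otimes>\<^sub>M beta_measure (A + 1) C))"
    by (subst nn_integral_distr) auto
  also have "\<dots> = (\<integral>\<^sup>+u. \<integral>\<^sup>+v. g (u * v) \<partial>beta_measure (A + 1) C \<partial>beta_measure A 1)"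
    by (subst V.nn_integral_fst[symmetric]) auto
  finally show ?thesis ..
qed

lemma nn_swap:
  assumes "prob_space M1" "prob_space M2" "case_prod f \<in> borel_measurable (M1 \<Otimes>\<^sub>M M2)"
  shows "(\<integral>\<^sup>+x. \<integral>\<^sup>+y. f x y \<partial>M2 \<partial>M1) = (\<integral>\<^sup>+y. \<integral>\<^sup>+x. f x y \<partial>M1 \<partial>M2)"
proof -
  interpret M1: prob_space M1 by fact
  interpret M2: prob_space M2 by fact
  interpret pair_prob_space M1 M2 by unfold_locales
  show ?thesis using Fubini'[OF assms(3)] by simp
qed

lemma stat1:
  fixes a c :: nat
  defines "A \<equiv> real (Suc a)" and "C \<equiv> real (Suc c)"
  assumes [measurable]: "g \<in> borel_measurable borel"
  shows "(\<integral>\<^sup>+x. \<integral>\<^sup>+b. g (fst b * (1 - snd b) * x + snd b) \<partial>innov (Suc a) (Suc c) \<partial>beta_measure (A + 1) C)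
        = (\<integral>\<^sup>+x. g x \<partial>beta_measure (A + 1) C)"
proof -
  have A0: "A > 0" and C0: "C > 0" by (auto simp: A_def C_def)
  let ?P = "beta_measure (A + 1) C" and ?B1 = "beta_measure A 1" and ?B2 = "beta_measure 1 C"
  interpret P: prob_space ?P by (rule prob_space_beta) (use A0 C0 in auto)
  interpret B1: prob_space ?B1 by (rule prob_space_beta) (use A0 C0 in auto)
  interpret B2: prob_space ?B2 by (rule prob_space_beta) (use A0 C0 in auto)
  have pP: "prob_space ?P" and pB1: "prob_space ?B1" and pB2: "prob_space ?B2"
    by unfold_locales
  have inn: "innov (Suc a) (Suc c) = ?B1 \<Otimes>\<^sub>M ?B2" by (simp add: innov_def A_def C_def)
  have "(\<integral>\<^sup>+x. \<integral>\<^sup>+b. g (fst b * (1 - snd b) * x + snd b) \<partial>innov (Suc a) (Suc c) \<partial>?P)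
      = (\<integral>\<^sup>+x. \<integral>\<^sup>+b1. \<integral>\<^sup>+b2. g (1 - (1 - b2) * (1 - b1 * x)) \<partial>?B2 \<partial>?B1 \<partial>?P)"
  proof (rule nn_integral_cong)
    fix x
    have "(\<integral>\<^sup>+b. g (fst b * (1 - snd b) * x + snd b) \<partial>(?B1 \<Otimes>\<^sub>M ?B2))
        = (\<integral>\<^sup>+b1. \<integral>\<^sup>+b2. g (b1 * (1 - b2) * x + b2) \<partial>?B2 \<partial>?B1)"
      by (subst B2.nn_integral_fst[symmetric]) auto
    also have "\<dots> = (\<integral>\<^sup>+b1. \<integral>\<^sup>+b2. g (1 - (1 - b2) * (1 - b1 * x)) \<partial>?B2 \<partial>?B1)"
      by (simp add: algebra_simps)
    finally show "(\<integral>\<^sup>+b. g (fst b * (1 - snd b) * x + snd b) \<partial>innov (Suc a) (Suc c))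
        = (\<integral>\<^sup>+b1. \<integral>\<^sup>+b2. g (1 - (1 - b2) * (1 - b1 * x)) \<partial>?B2 \<partial>?B1)" unfolding inn .
  qed
  also have "\<dots> = (\<integral>\<^sup>+b1. \<integral>\<^sup>+x. \<integral>\<^sup>+b2. g (1 - (1 - b2) * (1 - b1 * x)) \<partial>?B2 \<partial>?P \<partial>?B1)"
    by (rule nn_swap[OF pP pB1]) measurable
  also have "\<dots> = (\<integral>\<^sup>+b1. \<integral>\<^sup>+b2. \<integral>\<^sup>+x. g (1 - (1 - b2) * (1 - b1 * x)) \<partial>?P \<partial>?B2 \<partial>?B1)"
    by (rule nn_integral_cong, rule nn_swap[OF pP pB2]) measurable
  also have "\<dots> = (\<integral>\<^sup>+b2. \<integral>\<^sup>+b1. \<integral>\<^sup>+x. g (1 - (1 - b2) * (1 - b1 * x)) \<partial>?P \<partial>?B1 \<partial>?B2)"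
    by (rule nn_swap[OF pB1 pB2]) measurable
  also have "\<dots> = (\<integral>\<^sup>+b2. \<integral>\<^sup>+y. g (1 - (1 - b2) * (1 - y)) \<partial>beta_measure A (C + 1) \<partial>?B2)"
    by (rule nn_integral_cong) (unfold A_def C_def, rule nn_beta_product, measurable)
  also have "\<dots> = (\<integral>\<^sup>+b2. \<integral>\<^sup>+w. g (1 - (1 - b2) * w) \<partial>beta_measure (C + 1) A \<partial>?B2)"
  proof (rule nn_integral_cong)
    fix b2
    show "(\<integral>\<^sup>+y. g (1 - (1 - b2) * (1 - y)) \<partial>beta_measure A (C + 1)) = (\<integral>\<^sup>+w. g (1 - (1 - b2) * w) \<partial>beta_measure (C + 1) A)"
      using nn_integral_beta_reflect[of "C + 1" A "\<lambda>y. g (1 - (1 - b2) * (1 - y))"] A0 C0 by simp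
  qed
  also have "\<dots> = (\<integral>\<^sup>+v. \<integral>\<^sup>+w. g (1 - v * w) \<partial>beta_measure (C + 1) A \<partial>beta_measure C 1)"
  proof -
    interpret Q: prob_space "beta_measure (C + 1) A" by (rule prob_space_beta) (use A0 C0 in auto)
    have mF: "(\<lambda>v. \<integral>\<^sup>+w. g (1 - v * w) \<partial>beta_measure (C + 1) A) \<in> borel_measurable borel" by measurable
    show ?thesis using nn_integral_beta_reflect[OF _ _ mF] A0 C0 by simp
  qed
  also have "\<dots> = (\<integral>\<^sup>+q. g (1 - q) \<partial>beta_measure C (A + 1))"
    unfolding A_def C_def by (rule nn_beta_product) measurable
  also have "\<dots> = (\<integral>\<^sup>+x. g x \<partial>?P)"
    by (rule nn_integral_beta_reflect) (use A0 C0 in auto)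
  finally show ?thesis .
qed



lemma prob_space_innov: "prob_space (innov (Suc a) (Suc c))"
  unfolding innov_def
  by (rule prob_space_pair) (auto intro!: prob_space_beta)

lemma sets_innov[measurable_cong]: "sets (innov N1 N2) = sets (borel \<Otimes>\<^sub>M borel)"
  unfolding innov_def by (rule sets_pair_measure_cong) auto

lemma chain_upd: "t < j \<Longrightarrow> chain z t (w(j := y)) = chain z t w"
  by (induction t) auto

lemma chain_meas_pair:
  assumes "{1..t} \<subseteq> J"
  shows "(\<lambda>p. chain (fst p) t (snd p)) \<in> borel_measurable (borel \<Otimes>\<^sub>M PiM J (\<lambda>_. innov N1 N2))"
  using assms
proof (induction t)
  case 0 then show ?case by simp
next
  case (Suc t)
  have "{1..t} \<subseteq> J" using Suc.prems by auto
  then have IH[measurable]: "(\<lambda>p. chain (fst p) t (snd p)) \<in> borel_measurable (borel \<Otimes>\<^sub>M PiM J (\<lambda>_. innov N1 N2))"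
    by (rule Suc.IH)
  have J: "Suc t \<in> J" using Suc.prems by auto
  have [measurable]: "(\<lambda>p. snd p (Suc t)) \<in> measurable (borel \<Otimes>\<^sub>M PiM J (\<lambda>_. innov N1 N2)) (innov N1 N2)"
    by (rule measurable_compose[OF measurable_snd measurable_component_singleton[OF J]])
  have eq: "(\<lambda>p. chain (fst p) (Suc t) (snd p)) = (\<lambda>p. fst (snd p (Suc t)) * (1 - snd (snd p (Suc t))) * chain (fst p) t (snd p) + snd (snd p (Suc t)))"
    by auto
  have fm: "fst \<in> borel_measurable (innov N1 N2)" "snd \<in> borel_measurable (innov N1 N2)"
    by (simp_all add: measurable_cong_sets[OF sets_innov refl])
  have f1: "(\<lambda>p. fst (snd p (Suc t))) \<in> borel_measurable (borel \<Otimes>\<^sub>M PiM J (\<lambda>_. innov N1 N2))"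
    by (rule measurable_compose[OF measurable_compose[OF measurable_snd measurable_component_singleton[OF J]] fm(1)])
  have f2: "(\<lambda>p. snd (snd p (Suc t))) \<in> borel_measurable (borel \<Otimes>\<^sub>M PiM J (\<lambda>_. innov N1 N2))"
    by (rule measurable_compose[OF measurable_compose[OF measurable_snd measurable_component_singleton[OF J]] fm(2)])
  show ?case unfolding eq
    by (intro borel_measurable_add borel_measurable_times borel_measurable_diff f1 f2 IH measurable_const) simp
qed

lemma chain_meas:
  assumes "{1..t} \<subseteq> J"
  shows "(\<lambda>w. chain z t w) \<in> borel_measurable (PiM J (\<lambda>_. innov N1 N2))"
proof -
  have "(\<lambda>w. (z, w)) \<in> measurable (PiM J (\<lambda>_. innov N1 N2)) (borel \<Otimes>\<^sub>M PiM J (\<lambda>_. innov N1 N2))"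
    by measurable
  from measurable_comp[OF this chain_meas_pair[OF assms]] show ?thesis by (simp add: comp_def)
qed

lemma chain_diff:
  "chain x t w - chain z t w = (\<Prod>i\<in>{1..t}. fst (w i) * (1 - snd (w i))) * (x - z)"
proof (induction t)
  case (Suc t)
  have "chain x (Suc t) w - chain z (Suc t) w = fst (w (Suc t)) * (1 - snd (w (Suc t))) * (chain x t w - chain z t w)"
    by (simp add: algebra_simps)
  also have "\<dots> = (\<Prod>i\<in>{1..Suc t}. fst (w i) * (1 - snd (w i))) * (x - z)"
    by (simp add: Suc.IH prod.nat_ivl_Suc')
  finally show ?case .
qed simp

lemma stat_t:
  fixes a c :: nat
  defines "A \<equiv> real (Suc a)" and "C \<equiv> real (Suc c)"
  assumes [measurable]: "g \<in> borel_measurable borel"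
  shows "(\<integral>\<^sup>+x. \<integral>\<^sup>+w. g (chain x t w) \<partial>PiM {1..t} (\<lambda>_. innov (Suc a) (Suc c)) \<partial>beta_measure (A + 1) C)
        = (\<integral>\<^sup>+x. g x \<partial>beta_measure (A + 1) C)"
  using assms(3)
proof (induction t arbitrary: g)
  case 0
  have "prob_space (PiM {1..0::nat} (\<lambda>_. innov (Suc a) (Suc c)))"
    by (rule prob_space_PiM) (rule prob_space_innov)
  then show ?case by (simp add: prob_space.emeasure_space_1)
next
  case (Suc t)
  note [measurable] = Suc.prems
  let ?I = "innov (Suc a) (Suc c)"
  interpret I: prob_space ?I by (rule prob_space_innov)
  interpret PP: product_prob_space "\<lambda>_. ?I" UNIV by unfold_locales
  define h where "h u = (\<integral>\<^sup>+b. g (fst b * (1 - snd b) * u + snd b) \<partial>?I)" for u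
  have hm[measurable]: "h \<in> borel_measurable borel" unfolding h_def by measurable
  have "(\<integral>\<^sup>+w. g (chain x (Suc t) w) \<partial>PiM {1..Suc t} (\<lambda>_. ?I)) = (\<integral>\<^sup>+w. h (chain x t w) \<partial>PiM {1..t} (\<lambda>_. ?I))" for x
  proof -
    have ins: "{1..Suc t} = insert (Suc t) {1..t}" by auto
    have m: "(\<lambda>w. g (chain x (Suc t) w)) \<in> borel_measurable (PiM (insert (Suc t) {1..t}) (\<lambda>_. ?I))"
      using chain_meas[of "Suc t" "insert (Suc t) {1..t}" x] by measurable auto
    show ?thesis
      unfolding ins
      by (subst PP.product_nn_integral_insert[OF _ _ m])
         (auto simp: chain_upd h_def intro!: nn_integral_cong)
  qed
  then have "(\<integral>\<^sup>+x. \<integral>\<^sup>+w. g (chain x (Suc t) w) \<partial>PiM {1..Suc t} (\<lambda>_. ?I) \<partial>beta_measure (A + 1) C)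
      = (\<integral>\<^sup>+x. \<integral>\<^sup>+w. h (chain x t w) \<partial>PiM {1..t} (\<lambda>_. ?I) \<partial>beta_measure (A + 1) C)"
    by simp
  also have "\<dots> = (\<integral>\<^sup>+x. h x \<partial>beta_measure (A + 1) C)" by (rule Suc.IH) (rule hm)
  also have "\<dots> = (\<integral>\<^sup>+x. g x \<partial>beta_measure (A + 1) C)"
    unfolding h_def A_def C_def by (rule stat1) (rule Suc.prems)
  finally show ?case .
qed



definition piB :: "nat \<Rightarrow> nat \<Rightarrow> real measure" where
  "piB a c = beta_measure (real (Suc a) + 1) (real (Suc c))"
definition Pm :: "nat \<Rightarrow> nat \<Rightarrow> nat \<Rightarrow> (nat \<Rightarrow> real \<times> real) measure" where
  "Pm a c t = PiM {1..t} (\<lambda>_. innov (Suc a) (Suc c))"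
definition Qm where "Qm a c t = piB a c \<Otimes>\<^sub>M Pm a c t"

definition inbox :: "real \<times> real \<Rightarrow> bool" where
  "inbox b \<longleftrightarrow> 0 < fst b \<and> fst b < 1 \<and> 0 < snd b \<and> snd b < 1"

lemma prob_piB: "prob_space (piB a c)"
  unfolding piB_def by (rule prob_space_beta) auto
lemma prob_Pm: "prob_space (Pm a c t)"
  unfolding Pm_def by (rule prob_space_PiM) (rule prob_space_innov)
lemma prob_Qm: "prob_space (Qm a c t)"
  unfolding Qm_def by (rule prob_space_pair[OF prob_piB prob_Pm])

lemma sets_piB[measurable_cong, simp]: "sets (piB a c) = sets borel"
  by (simp add: piB_def)

lemma AE_piB: "AE x in piB a c. 0 < x \<and> x < 1"
  unfolding piB_def by (rule AE_beta) auto

lemma AE_innov: "AE b in innov (Suc a) (Suc c). inbox b"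
proof -
  interpret B1: prob_space "beta_measure (real (Suc a)) 1" by (rule prob_space_beta) auto
  interpret B2: prob_space "beta_measure 1 (real (Suc c))" by (rule prob_space_beta) auto
  interpret pair_prob_space "beta_measure (real (Suc a)) 1" "beta_measure 1 (real (Suc c))" by unfold_locales
  have 1: "AE x in beta_measure (real (Suc a)) 1. 0 < x \<and> x < 1" by (rule AE_beta) auto
  have 2: "AE y in beta_measure 1 (real (Suc c)). 0 < y \<and> y < 1" by (rule AE_beta) auto
  show ?thesis unfolding innov_def inbox_def
  proof (rule AE_pair_measure)
    show "{x \<in> space (beta_measure (real (Suc a)) 1 \<Otimes>\<^sub>M beta_measure 1 (real (Suc c))).
      0 < fst x \<and> fst x < 1 \<and> 0 < snd x \<and> snd x < 1} \<in> sets (beta_measure (real (Suc a)) 1 \<Otimes>\<^sub>M beta_measure 1 (real (Suc c)))"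
      by measurable
    show "AE x in beta_measure (real (Suc a)) 1. AE y in beta_measure 1 (real (Suc c)). 0 < fst (x, y) \<and> fst (x, y) < 1 \<and> 0 < snd (x, y) \<and> snd (x, y) < 1"
      using 1 by eventually_elim (use 2 in \<open>auto elim: eventually_mono\<close>)
  qed
qed

lemma AE_Pm: "AE w in Pm a c t. \<forall>i\<in>{1..t}. inbox (w i)"
proof -
  interpret I: prob_space "innov (Suc a) (Suc c)" by (rule prob_space_innov)
  interpret PP: product_prob_space "\<lambda>_. innov (Suc a) (Suc c)" "{1..t}" by unfold_locales
  show ?thesis unfolding Pm_def
    by (subst AE_ball_countable) (auto intro!: PP.AE_component AE_innov)
qed

lemma AE_Qm: "AE q in Qm a c t. (0 < fst q \<and> fst q < 1) \<and> (\<forall>i\<in>{1..t}. inbox (snd q i))"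
proof -
  interpret P1: prob_space "piB a c" by (rule prob_piB)
  interpret P2: prob_space "Pm a c t" by (rule prob_Pm)
  interpret pair_prob_space "piB a c" "Pm a c t" by unfold_locales
  show ?thesis unfolding Qm_def
  proof (rule AE_pair_measure)
    show "{q \<in> space (piB a c \<Otimes>\<^sub>M Pm a c t). (0 < fst q \<and> fst q < 1) \<and> (\<forall>i\<in>{1..t}. inbox (snd q i))} \<in> sets (piB a c \<Otimes>\<^sub>M Pm a c t)"
      unfolding inbox_def Pm_def by measurable
    show "AE x in piB a c. AE y in Pm a c t. (0 < fst (x, y) \<and> fst (x, y) < 1) \<and> (\<forall>i\<in>{1..t}. inbox (snd (x, y) i))"
      using AE_piB by eventually_elim (use AE_Pm in \<open>auto elim: eventually_mono\<close>)
  qed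
qed

lemma chain_bound:
  assumes "0 \<le> z" "z \<le> 1" "\<forall>i\<in>{1..t}. inbox (w i)"
  shows "0 \<le> chain z t w \<and> chain z t w \<le> 1"
  using assms(3)
proof (induction t)
  case (Suc t)
  then have IH: "0 \<le> chain z t w \<and> chain z t w \<le> 1" by auto
  have b: "inbox (w (Suc t))" using Suc.prems by auto
  define x where "x = fst (w (Suc t))"
  define y where "y = snd (w (Suc t))"
  define u where "u = chain z t w"
  have h: "0 < x" "x < 1" "0 < y" "y < 1" "0 \<le> u" "u \<le> 1" using b IH by (auto simp: inbox_def x_def y_def u_def)
  have "x * (1 - y) * u \<le> 1 - y"
  proof -
    have "x * u \<le> 1" using h by (simp add: mult_le_one)
    then have "(1 - y) * (x * u) \<le> (1 - y) * 1" using h by (intro mult_left_mono) auto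
    then show ?thesis by (simp add: algebra_simps)
  qed
  moreover have "0 \<le> x * (1 - y) * u" using h by simp
  moreover have e: "chain z (Suc t) w = x * (1 - y) * u + y" by (simp add: x_def y_def u_def)
  ultimately show ?case using h by linarith
qed (use assms in auto)

lemma prod_nonneg_inbox: assumes "\<forall>i\<in>{1..t}. inbox (w i)" shows "0 \<le> (\<Prod>i\<in>{1..t}. fst (w i) * (1 - snd (w i)))"
proof (rule prod_nonneg)
  fix i assume "i \<in> {1..t}"
  with assms have "inbox (w i)" by auto
  then show "0 \<le> fst (w i) * (1 - snd (w i))" by (auto simp: inbox_def)
qed



lemma sets_Qm: "sets (Qm a c t) = sets (borel \<Otimes>\<^sub>M Pm a c t)"
  unfolding Qm_def by (rule sets_pair_measure_cong) auto

lemma meas_chain_Q[measurable]: "(\<lambda>q. chain (fst q) t (snd q)) \<in> borel_measurable (Qm a c t)"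
  unfolding measurable_cong_sets[OF sets_Qm refl] Pm_def by (rule chain_meas_pair) auto

lemma meas_chain_Pm[measurable]: "(\<lambda>w. chain z t w) \<in> borel_measurable (Pm a c t)"
  unfolding Pm_def by (rule chain_meas) auto

lemma meas_chain_Q2[measurable]: "(\<lambda>q. chain z t (snd q)) \<in> borel_measurable (Qm a c t)"
proof -
  have "snd \<in> measurable (Qm a c t) (Pm a c t)"
    unfolding measurable_cong_sets[OF sets_Qm refl] by (rule measurable_snd)
  from measurable_compose[OF this meas_chain_Pm] show ?thesis .
qed

lemma nn_integral_Q_snd:
  assumes [measurable]: "h \<in> borel_measurable (Pm a c t)"
  shows "(\<integral>\<^sup>+q. h (snd q) \<partial>Qm a c t) = (\<integral>\<^sup>+w. h w \<partial>Pm a c t)"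
proof -
  interpret P1: prob_space "piB a c" by (rule prob_piB)
  interpret P2: prob_space "Pm a c t" by (rule prob_Pm)
  have "(\<integral>\<^sup>+q. h (snd q) \<partial>Qm a c t) = (\<integral>\<^sup>+x. \<integral>\<^sup>+w. h w \<partial>Pm a c t \<partial>piB a c)"
    unfolding Qm_def by (subst P2.nn_integral_fst[symmetric]) auto
  also have "\<dots> = (\<integral>\<^sup>+w. h w \<partial>Pm a c t)" using P1.emeasure_space_1 by simp
  finally show ?thesis .
qed

lemma nn_integral_Q_pair:
  assumes [measurable]: "f \<in> borel_measurable (Qm a c t)"
  shows "(\<integral>\<^sup>+q. f q \<partial>Qm a c t) = (\<integral>\<^sup>+x. \<integral>\<^sup>+w. f (x, w) \<partial>Pm a c t \<partial>piB a c)"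
proof -
  interpret P2: prob_space "Pm a c t" by (rule prob_Pm)
  show ?thesis unfolding Qm_def
    by (rule P2.nn_integral_fst[symmetric]) (use assms in \<open>simp add: Qm_def\<close>)
qed

lemma marg_stat: "distr (Qm a c t) borel (\<lambda>q. chain (fst q) t (snd q)) = piB a c"
proof (rule measure_eqI)
  fix A :: "real set" assume "A \<in> sets (distr (Qm a c t) borel (\<lambda>q. chain (fst q) t (snd q)))"
  then have [measurable]: "A \<in> sets borel" by simp
  have "emeasure (distr (Qm a c t) borel (\<lambda>q. chain (fst q) t (snd q))) A
      = (\<integral>\<^sup>+x. indicator A x \<partial>distr (Qm a c t) borel (\<lambda>q. chain (fst q) t (snd q)))" by simp
  also have "\<dots> = (\<integral>\<^sup>+q. indicator A (chain (fst q) t (snd q)) \<partial>Qm a c t)"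
    by (rule nn_integral_distr) auto
  also have "\<dots> = (\<integral>\<^sup>+x. \<integral>\<^sup>+w. indicator A (chain x t w) \<partial>Pm a c t \<partial>piB a c)"
    by (subst nn_integral_Q_pair) auto
  also have "\<dots> = (\<integral>\<^sup>+x. indicator A x \<partial>piB a c)"
    unfolding Pm_def piB_def by (rule stat_t) auto
  also have "\<dots> = emeasure (piB a c) A" by simp
  finally show "emeasure (distr (Qm a c t) borel (\<lambda>q. chain (fst q) t (snd q))) A = emeasure (piB a c) A" .
qed simp

lemma marg_Pt: "distr (Qm a c t) borel (\<lambda>q. chain z t (snd q)) = Pt (Suc a) (Suc c) t z"
proof (rule measure_eqI)
  fix A :: "real set" assume "A \<in> sets (distr (Qm a c t) borel (\<lambda>q. chain z t (snd q)))"
  then have [measurable]: "A \<in> sets borel" by simp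
  have "emeasure (distr (Qm a c t) borel (\<lambda>q. chain z t (snd q))) A
      = (\<integral>\<^sup>+x. indicator A x \<partial>distr (Qm a c t) borel (\<lambda>q. chain z t (snd q)))" by simp
  also have "\<dots> = (\<integral>\<^sup>+q. indicator A (chain z t (snd q)) \<partial>Qm a c t)"
    by (rule nn_integral_distr) auto
  also have "\<dots> = (\<integral>\<^sup>+w. indicator A (chain z t w) \<partial>Pm a c t)"
    by (rule nn_integral_Q_snd) auto
  also have "\<dots> = (\<integral>\<^sup>+x. indicator A x \<partial>distr (Pm a c t) borel (chain z t))"
    by (rule nn_integral_distr[symmetric]) auto
  also have "\<dots> = emeasure (Pt (Suc a) (Suc c) t z) A" by (simp add: Pt_def Pm_def)
  finally show "emeasure (distr (Qm a c t) borel (\<lambda>q. chain z t (snd q))) A = emeasure (Pt (Suc a) (Suc c) t z) A" .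
qed (simp add: Pt_def)

definition gam where
  "gam a c t z = distr (Qm a c t) (borel \<Otimes>\<^sub>M borel) (\<lambda>q. (chain z t (snd q), chain (fst q) t (snd q)))"

lemma gam_coupling: "gam a c t z \<in> couplings (Pt (Suc a) (Suc c) t z) (piB a c)"
proof -
  have m[measurable]: "(\<lambda>q. (chain z t (snd q), chain (fst q) t (snd q))) \<in> measurable (Qm a c t) (borel \<Otimes>\<^sub>M borel)"
    by measurable
  have 1: "distr (gam a c t z) borel fst = Pt (Suc a) (Suc c) t z"
    unfolding gam_def by (subst distr_distr) (auto simp: comp_def marg_Pt)
  have 2: "distr (gam a c t z) borel snd = piB a c"
    unfolding gam_def by (subst distr_distr) (auto simp: comp_def marg_stat)
  show ?thesis unfolding couplings_def using 1 2 by (simp add: gam_def)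
qed



lemma Rr_eq: "(\<integral>\<^sup>+b. ennreal \<bar>fst b * (1 - snd b)\<bar> \<partial>innov (Suc a) (Suc c))
   = ennreal (real (Suc a) / (real (Suc a) + 1) * (real (Suc c) / (real (Suc c) + 1)))"
proof -
  let ?B1 = "beta_measure (real (Suc a)) 1" and ?B2 = "beta_measure 1 (real (Suc c))"
  interpret B1: prob_space ?B1 by (rule prob_space_beta) auto
  interpret B2: prob_space ?B2 by (rule prob_space_beta) auto
  have e1: "(\<integral>\<^sup>+x. ennreal \<bar>x\<bar> \<partial>?B1) = ennreal (real (Suc a) / (real (Suc a) + 1))"
  proof -
    have "(\<integral>\<^sup>+x. ennreal \<bar>x\<bar> \<partial>?B1) = (\<integral>\<^sup>+x. ennreal x \<partial>?B1)"
      by (rule nn_integral_cong_AE) (use AE_beta[of "real (Suc a)" 1] in \<open>auto elim!: eventually_mono\<close>)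
    also have "\<dots> = ennreal (real (Suc a) / (real (Suc a) + 1))" by (rule nn_integral_beta_mean) auto
    finally show ?thesis .
  qed
  have e2: "(\<integral>\<^sup>+x. ennreal \<bar>1 - x\<bar> \<partial>?B2) = ennreal (real (Suc c) / (real (Suc c) + 1))"
  proof -
    have "(\<integral>\<^sup>+x. ennreal \<bar>1 - x\<bar> \<partial>?B2) = (\<integral>\<^sup>+x. ennreal \<bar>x\<bar> \<partial>beta_measure (real (Suc c)) 1)"
      by (rule nn_integral_beta_reflect[where g="\<lambda>x. ennreal \<bar>x\<bar>"]) auto
    also have "\<dots> = (\<integral>\<^sup>+x. ennreal x \<partial>beta_measure (real (Suc c)) 1)"
      by (rule nn_integral_cong_AE) (use AE_beta[of "real (Suc c)" 1] in \<open>auto elim!: eventually_mono\<close>)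
    also have "\<dots> = ennreal (real (Suc c) / (real (Suc c) + 1))" by (rule nn_integral_beta_mean) auto
    finally show ?thesis .
  qed
  have "(\<integral>\<^sup>+b. ennreal \<bar>fst b * (1 - snd b)\<bar> \<partial>innov (Suc a) (Suc c))
      = (\<integral>\<^sup>+x. \<integral>\<^sup>+y. ennreal \<bar>x\<bar> * ennreal \<bar>1 - y\<bar> \<partial>?B2 \<partial>?B1)"
    unfolding innov_def by (subst B2.nn_integral_fst[symmetric]) (auto simp: abs_mult ennreal_mult)
  also have "\<dots> = (\<integral>\<^sup>+x. ennreal \<bar>x\<bar> * ennreal (real (Suc c) / (real (Suc c) + 1)) \<partial>?B1)"
    by (rule nn_integral_cong, subst nn_integral_cmult) (auto simp: e2 simp del: of_nat_Suc)
  also have "\<dots> = ennreal (real (Suc a) / (real (Suc a) + 1)) * ennreal (real (Suc c) / (real (Suc c) + 1))"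
    by (subst nn_integral_multc) (auto simp: e1 simp del: of_nat_Suc)
  also have "\<dots> = ennreal (real (Suc a) / (real (Suc a) + 1) * (real (Suc c) / (real (Suc c) + 1)))"
    by (rule ennreal_mult[symmetric]) auto
  finally show ?thesis .
qed

definition rr :: "nat \<Rightarrow> nat \<Rightarrow> real" where
  "rr a c = real (Suc a) / (real (Suc a) + 1) * (real (Suc c) / (real (Suc c) + 1))"

lemma rr_nonneg: "0 \<le> rr a c" by (simp add: rr_def)

lemma cost_nn:
  "(\<integral>\<^sup>+q. ennreal \<bar>chain z t (snd q) - chain (fst q) t (snd q)\<bar> \<partial>Qm a c t)
    = (\<integral>\<^sup>+x. ennreal \<bar>z - x\<bar> \<partial>piB a c) * ennreal (rr a c ^ t)"
proof -
  let ?I = "innov (Suc a) (Suc c)"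
  let ?k = "\<lambda>b::real \<times> real. ennreal \<bar>fst b * (1 - snd b)\<bar>"
  interpret I: prob_space ?I by (rule prob_space_innov)
  interpret PP: product_prob_space "\<lambda>_. ?I" UNIV by unfold_locales
  have km[measurable]: "?k \<in> borel_measurable ?I"
    unfolding measurable_cong_sets[OF sets_innov refl] by measurable
  have pt: "(\<integral>\<^sup>+w. (\<Prod>i\<in>{1..t}. ?k (w i)) \<partial>Pm a c t) = ennreal (rr a c ^ t)"
  proof -
    have "(\<integral>\<^sup>+w. (\<Prod>i\<in>{1..t}. ?k (w i)) \<partial>Pm a c t) = (\<Prod>i\<in>{1..t}. integral\<^sup>N ?I ?k)"
      unfolding Pm_def by (rule PP.product_nn_integral_prod) auto
    also have "\<dots> = ennreal (rr a c) ^ t" by (simp add: Rr_eq rr_def)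
    also have "\<dots> = ennreal (rr a c ^ t)" by (rule ennreal_power) (rule rr_nonneg)
    finally show ?thesis .
  qed
  have pm[measurable]: "(\<lambda>w. \<Prod>i\<in>{1..t}. ?k (w i)) \<in> borel_measurable (Pm a c t)"
    unfolding Pm_def by measurable
  have "(\<integral>\<^sup>+q. ennreal \<bar>chain z t (snd q) - chain (fst q) t (snd q)\<bar> \<partial>Qm a c t)
      = (\<integral>\<^sup>+q. ennreal \<bar>z - fst q\<bar> * (\<Prod>i\<in>{1..t}. ?k (snd q i)) \<partial>Qm a c t)"
  proof (rule nn_integral_cong)
    fix q :: "real \<times> (nat \<Rightarrow> real \<times> real)"
    have "\<bar>chain z t (snd q) - chain (fst q) t (snd q)\<bar>
        = \<bar>z - fst q\<bar> * (\<Prod>i\<in>{1..t}. \<bar>fst (snd q i) * (1 - snd (snd q i))\<bar>)"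
      by (simp add: chain_diff abs_mult abs_prod mult.commute)
    moreover have nn: "0 \<le> (\<Prod>i\<in>{1..t}. \<bar>fst (snd q i) * (1 - snd (snd q i))\<bar>)"
      by (rule prod_nonneg) auto
    ultimately have "ennreal \<bar>chain z t (snd q) - chain (fst q) t (snd q)\<bar> = ennreal \<bar>z - fst q\<bar> * ennreal (\<Prod>i\<in>{1..t}. \<bar>fst (snd q i) * (1 - snd (snd q i))\<bar>)"
      using ennreal_mult[OF abs_ge_zero nn] by simp
    also have "ennreal (\<Prod>i\<in>{1..t}. \<bar>fst (snd q i) * (1 - snd (snd q i))\<bar>) = (\<Prod>i\<in>{1..t}. ?k (snd q i))"
      by (rule prod_ennreal[symmetric]) auto
    finally show "ennreal \<bar>chain z t (snd q) - chain (fst q) t (snd q)\<bar> = ennreal \<bar>z - fst q\<bar> * (\<Prod>i\<in>{1..t}. ?k (snd q i))" .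
  qed
  also have "\<dots> = (\<integral>\<^sup>+x. \<integral>\<^sup>+w. ennreal \<bar>z - x\<bar> * (\<Prod>i\<in>{1..t}. ?k (w i)) \<partial>Pm a c t \<partial>piB a c)"
  proof (subst nn_integral_Q_pair)
    have "(\<lambda>q. snd q) \<in> measurable (Qm a c t) (Pm a c t)"
      unfolding measurable_cong_sets[OF sets_Qm refl] by (rule measurable_snd)
    moreover have "fst \<in> borel_measurable (Qm a c t)"
      unfolding measurable_cong_sets[OF sets_Qm refl] by (rule measurable_fst)
    ultimately show "(\<lambda>q. ennreal \<bar>z - fst q\<bar> * (\<Prod>i\<in>{1..t}. ?k (snd q i))) \<in> borel_measurable (Qm a c t)"
      using measurable_compose[OF _ pm] by measurable
  qed simp
  also have "\<dots> = (\<integral>\<^sup>+x. ennreal \<bar>z - x\<bar> * ennreal (rr a c ^ t) \<partial>piB a c)"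
    by (rule nn_integral_cong, subst nn_integral_cmult[OF pm]) (simp only: pt)
  also have "\<dots> = (\<integral>\<^sup>+x. ennreal \<bar>z - x\<bar> \<partial>piB a c) * ennreal (rr a c ^ t)"
    by (rule nn_integral_multc) measurable
  finally show ?thesis .
qed

lemma cost_int:
  "(\<integral>p. \<bar>fst p - snd p\<bar> \<partial>gam a c t z) = enn2real ((\<integral>\<^sup>+x. ennreal \<bar>z - x\<bar> \<partial>piB a c) * ennreal (rr a c ^ t))"
proof -
  have "(\<integral>p. \<bar>fst p - snd p\<bar> \<partial>gam a c t z) = (\<integral>q. \<bar>chain z t (snd q) - chain (fst q) t (snd q)\<bar> \<partial>Qm a c t)"
    unfolding gam_def by (subst integral_distr) auto
  also have "\<dots> = enn2real (\<integral>\<^sup>+q. ennreal \<bar>chain z t (snd q) - chain (fst q) t (snd q)\<bar> \<partial>Qm a c t)"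
    by (rule integral_eq_nn_integral) auto
  finally show ?thesis by (simp add: cost_nn)
qed



definition mm :: "nat \<Rightarrow> nat \<Rightarrow> real" where
  "mm a c = (real (Suc a) + 1) / (real (Suc a) + 1 + real (Suc c))"

lemma Emean0: "(\<integral>\<^sup>+x. ennreal \<bar>0 - x\<bar> \<partial>piB a c) = ennreal (mm a c)"
proof -
  have "(\<integral>\<^sup>+x. ennreal \<bar>0 - x\<bar> \<partial>piB a c) = (\<integral>\<^sup>+x. ennreal x \<partial>piB a c)"
    by (rule nn_integral_cong_AE) (use AE_piB[of a c] in \<open>auto elim!: eventually_mono\<close>)
  also have "\<dots> = ennreal (mm a c)" unfolding piB_def mm_def
    by (rule nn_integral_beta_mean) auto
  finally show ?thesis .
qed

lemma Emean1: "(\<integral>\<^sup>+x. ennreal \<bar>1 - x\<bar> \<partial>piB a c) = ennreal (1 - mm a c)"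
proof -
  have "(\<integral>\<^sup>+x. ennreal \<bar>1 - x\<bar> \<partial>piB a c) = (\<integral>\<^sup>+x. ennreal \<bar>x\<bar> \<partial>beta_measure (real (Suc c)) (real (Suc a) + 1))"
    unfolding piB_def by (rule nn_integral_beta_reflect[where g="\<lambda>x. ennreal \<bar>x\<bar>"]) auto
  also have "\<dots> = (\<integral>\<^sup>+x. ennreal x \<partial>beta_measure (real (Suc c)) (real (Suc a) + 1))"
    by (rule nn_integral_cong_AE) (use AE_beta[of "real (Suc c)" "real (Suc a) + 1"] in \<open>auto elim!: eventually_mono\<close>)
  also have "\<dots> = ennreal (real (Suc c) / (real (Suc c) + (real (Suc a) + 1)))"
    by (rule nn_integral_beta_mean) auto
  also have "real (Suc c) / (real (Suc c) + (real (Suc a) + 1)) = 1 - mm a c"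
    unfolding mm_def by (simp add: field_simps)
  finally show ?thesis .
qed

lemma mm_bounds: "0 \<le> mm a c" "mm a c \<le> 1"
  by (auto simp: mm_def)

lemma Emean_le:
  assumes "0 \<le> z" "z \<le> 1"
  shows "(\<integral>\<^sup>+x. ennreal \<bar>z - x\<bar> \<partial>piB a c) \<le> ennreal (max (mm a c) (1 - mm a c))"
proof -
  have "(\<integral>\<^sup>+x. ennreal \<bar>z - x\<bar> \<partial>piB a c) \<le>
        (\<integral>\<^sup>+x. ennreal (1 - z) * ennreal \<bar>0 - x\<bar> + ennreal z * ennreal \<bar>1 - x\<bar> \<partial>piB a c)"
  proof (rule nn_integral_mono_AE)
    show "AE x in piB a c. ennreal \<bar>z - x\<bar> \<le> ennreal (1 - z) * ennreal \<bar>0 - x\<bar> + ennreal z * ennreal \<bar>1 - x\<bar>"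
      using AE_piB[of a c]
    proof eventually_elim
      case (elim x)
      have "\<bar>z - x\<bar> \<le> (1 - z) * \<bar>0 - x\<bar> + z * \<bar>1 - x\<bar>"
      proof (cases "x \<ge> z")
        case True
        have "0 \<le> z * (1 - x)" using elim assms by simp
        then show ?thesis using True elim by (simp add: algebra_simps)
      next
        case False
        have "0 \<le> x * (1 - z)" using elim assms by simp
        then show ?thesis using False elim by (simp add: algebra_simps)
      qed
      then have "ennreal \<bar>z - x\<bar> \<le> ennreal ((1 - z) * \<bar>0 - x\<bar> + z * \<bar>1 - x\<bar>)"
        by (rule ennreal_leI)
      also have "\<dots> = ennreal (1 - z) * ennreal \<bar>0 - x\<bar> + ennreal z * ennreal \<bar>1 - x\<bar>"
        using assms by (simp add: ennreal_plus ennreal_mult)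
      finally show ?case .
    qed
  qed
  also have "\<dots> = ennreal (1 - z) * ennreal (mm a c) + ennreal z * ennreal (1 - mm a c)"
    by (subst nn_integral_add) (auto simp: nn_integral_cmult Emean0[simplified] Emean1)
  also have "\<dots> = ennreal ((1 - z) * mm a c + z * (1 - mm a c))"
    using assms mm_bounds[of a c] by (simp add: ennreal_plus ennreal_mult)
  also have "\<dots> \<le> ennreal (max (mm a c) (1 - mm a c))"
  proof (rule ennreal_leI)
    have "(1 - z) * mm a c \<le> (1 - z) * max (mm a c) (1 - mm a c)" using assms by (intro mult_left_mono) auto
    moreover have "z * (1 - mm a c) \<le> z * max (mm a c) (1 - mm a c)" using assms by (intro mult_left_mono) auto
    ultimately show "(1 - z) * mm a c + z * (1 - mm a c) \<le> max (mm a c) (1 - mm a c)"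
      by (simp add: algebra_simps)
  qed
  finally show ?thesis .
qed

lemma abs_integral_sign:
  fixes f :: "'a \<Rightarrow> real"
  assumes [measurable]: "f \<in> borel_measurable M"
  assumes "(AE x in M. 0 \<le> f x) \<or> (AE x in M. f x \<le> 0)"
  shows "\<bar>integral\<^sup>L M f\<bar> = (\<integral>x. \<bar>f x\<bar> \<partial>M)"
  using assms(2)
proof
  assume ae: "AE x in M. 0 \<le> f x"
  have "(\<integral>x. \<bar>f x\<bar> \<partial>M) = integral\<^sup>L M f"
    by (rule integral_cong_AE) (use ae in \<open>auto elim!: eventually_mono\<close>)
  moreover have "0 \<le> integral\<^sup>L M f" by (rule integral_nonneg_AE[OF ae])
  ultimately show ?thesis by simp
next
  assume ae: "AE x in M. f x \<le> 0"
  have "(\<integral>x. \<bar>f x\<bar> \<partial>M) = (\<integral>x. - f x \<partial>M)"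
    by (rule integral_cong_AE) (use ae in \<open>auto elim!: eventually_mono\<close>)
  moreover have "0 \<le> (\<integral>x. - f x \<partial>M)" by (rule integral_nonneg_AE) (use ae in \<open>auto elim!: eventually_mono\<close>)
  ultimately show ?thesis by simp
qed



lemma aeQ_bounds:
  fixes a c t :: nat
  assumes "0 \<le> z" "z \<le> 1"
  shows "AE q in Qm a c t. (0 \<le> chain z t (snd q) \<and> chain z t (snd q) \<le> 1) \<and>
                           (0 \<le> chain (fst q) t (snd q) \<and> chain (fst q) t (snd q) \<le> 1)"
  using AE_Qm[where a=a and c=c and t=t]
proof eventually_elim
  case (elim q)
  then show ?case using chain_bound[of z t "snd q"] chain_bound[of "fst q" t "snd q"] assms by auto
qed

lemma prob_Pt: "prob_space (Pt (Suc a) (Suc c) t z)"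
proof -
  interpret Q: prob_space "Qm a c t" by (rule prob_Qm)
  show ?thesis unfolding marg_Pt[symmetric, of a c t z] by (rule Q.prob_space_distr) measurable
qed

lemma coupling_lower:
  assumes "\<gamma> \<in> couplings (Pt (Suc a) (Suc c) t z0) (piB a c)" "z0 = 0 \<or> z0 = 1"
  shows "(\<integral>q. \<bar>chain z0 t (snd q) - chain (fst q) t (snd q)\<bar> \<partial>Qm a c t) \<le> (\<integral>p. \<bar>fst p - snd p\<bar> \<partial>\<gamma>)"
proof -
  have sg: "sets \<gamma> = sets (borel \<Otimes>\<^sub>M borel)" and m1: "distr \<gamma> borel fst = Pt (Suc a) (Suc c) t z0"
    and m2: "distr \<gamma> borel snd = piB a c" using assms(1) by (auto simp: couplings_def)
  have fm[measurable]: "fst \<in> borel_measurable \<gamma>" "snd \<in> borel_measurable \<gamma>"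
    by (simp_all add: measurable_cong_sets[OF sg refl])
  have sp: "space \<gamma> = UNIV" using sets_eq_imp_space_eq[OF sg] by (simp add: space_pair_measure)
  interpret Q: prob_space "Qm a c t" by (rule prob_Qm)
  have z0b: "0 \<le> z0" "z0 \<le> 1" using assms(2) by auto
  note aeQ = aeQ_bounds[OF z0b, where a=a and c=c and t=t]
  have "emeasure \<gamma> (space \<gamma>) = emeasure (distr \<gamma> borel fst) UNIV"
    by (subst emeasure_distr) (auto simp: sp)
  also have "\<dots> = 1" unfolding m1 using prob_space.emeasure_space_1[OF prob_Pt[of a c t z0]] by (simp add: Pt_def)
  finally interpret G: prob_space \<gamma> by (rule prob_spaceI)
  let ?g1 = "\<lambda>q. chain z0 t (snd q)" and ?g2 = "\<lambda>q. chain (fst q) t (snd q)"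
  have ae1: "AE p in \<gamma>. 0 \<le> fst p \<and> fst p \<le> 1"
  proof -
    have "AE x in distr (Qm a c t) borel ?g1. 0 \<le> x \<and> x \<le> 1"
      by (subst AE_distr_iff) (use aeQ in \<open>auto elim!: eventually_mono\<close>)
    then have "AE x in distr \<gamma> borel fst. 0 \<le> x \<and> x \<le> 1" unfolding m1 marg_Pt .
    then show ?thesis by (subst (asm) AE_distr_iff) auto
  qed
  have ae2: "AE p in \<gamma>. 0 \<le> snd p \<and> snd p \<le> 1"
  proof -
    have "AE x in distr \<gamma> borel snd. 0 \<le> x \<and> x \<le> 1" unfolding m2
      by (rule eventually_mono[OF AE_piB[where a=a and c=c]]) auto
    then show ?thesis by (subst (asm) AE_distr_iff) auto
  qed
  have i1: "integrable \<gamma> fst" by (rule G.integrable_const_bound[where B=1, OF eventually_mono[OF ae1]]) auto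
  have i2: "integrable \<gamma> snd" by (rule G.integrable_const_bound[where B=1, OF eventually_mono[OF ae2]]) auto
  have j1: "integrable (Qm a c t) ?g1" by (rule Q.integrable_const_bound[where B=1, OF eventually_mono[OF aeQ]]) auto
  have j2: "integrable (Qm a c t) ?g2" by (rule Q.integrable_const_bound[where B=1, OF eventually_mono[OF aeQ]]) auto
  have E1: "(\<integral>p. fst p \<partial>\<gamma>) = (\<integral>q. ?g1 q \<partial>Qm a c t)"
  proof -
    have "(\<integral>p. fst p \<partial>\<gamma>) = (\<integral>x. x \<partial>distr \<gamma> borel fst)" by (subst integral_distr) auto
    also have "\<dots> = (\<integral>x. x \<partial>distr (Qm a c t) borel ?g1)" unfolding m1 marg_Pt ..
    also have "\<dots> = (\<integral>q. ?g1 q \<partial>Qm a c t)" by (subst integral_distr) auto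
    finally show ?thesis .
  qed
  have E2: "(\<integral>p. snd p \<partial>\<gamma>) = (\<integral>q. ?g2 q \<partial>Qm a c t)"
  proof -
    have "(\<integral>p. snd p \<partial>\<gamma>) = (\<integral>x. x \<partial>distr \<gamma> borel snd)" by (subst integral_distr) auto
    also have "\<dots> = (\<integral>x. x \<partial>distr (Qm a c t) borel ?g2)" unfolding m2 marg_stat ..
    also have "\<dots> = (\<integral>q. ?g2 q \<partial>Qm a c t)" by (subst integral_distr) auto
    finally show ?thesis .
  qed
  have sign: "(AE q in Qm a c t. 0 \<le> ?g1 q - ?g2 q) \<or> (AE q in Qm a c t. ?g1 q - ?g2 q \<le> 0)"
  proof -
    have key: "AE q in Qm a c t. ?g1 q - ?g2 q = (\<Prod>i\<in>{1..t}. fst (snd q i) * (1 - snd (snd q i))) * (z0 - fst q)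
        \<and> 0 \<le> (\<Prod>i\<in>{1..t}. fst (snd q i) * (1 - snd (snd q i))) \<and> 0 < fst q \<and> fst q < 1"
      using AE_Qm[where a=a and c=c and t=t]
    proof eventually_elim
      case (elim q)
      have p: "0 \<le> (\<Prod>i\<in>{1..t}. fst (snd q i) * (1 - snd (snd q i)))"
        by (rule prod_nonneg_inbox) (use elim in blast)
      show ?case using elim p by (simp only: chain_diff)
    qed
    show ?thesis using assms(2)
    proof
      assume z: "z0 = 0"
      have "AE q in Qm a c t. ?g1 q - ?g2 q \<le> 0"
        using key by eventually_elim (use z in \<open>auto simp: mult_nonneg_nonpos\<close>)
      then show ?thesis ..
    next
      assume z: "z0 = 1"
      have "AE q in Qm a c t. 0 \<le> ?g1 q - ?g2 q"
        using key by eventually_elim (use z in auto)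
      then show ?thesis ..
    qed
  qed
  have "(\<integral>q. \<bar>?g1 q - ?g2 q\<bar> \<partial>Qm a c t) = \<bar>\<integral>q. ?g1 q - ?g2 q \<partial>Qm a c t\<bar>"
    by (rule abs_integral_sign[symmetric]) (use sign in auto)
  also have "\<dots> = \<bar>(\<integral>p. fst p \<partial>\<gamma>) - (\<integral>p. snd p \<partial>\<gamma>)\<bar>"
    using j1 j2 by (simp add: E1 E2)
  also have "\<dots> = \<bar>\<integral>p. fst p - snd p \<partial>\<gamma>\<bar>" using i1 i2 by simp
  also have "\<dots> \<le> (\<integral>p. \<bar>fst p - snd p\<bar> \<partial>\<gamma>)"
    using integral_norm_bound[of \<gamma> "\<lambda>p. fst p - snd p"] by simp
  finally show ?thesis .
qed

lemma W1_upper_gen: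
  "W1 (Pt (Suc a) (Suc c) t z) (piB a c) \<le> enn2real ((\<integral>\<^sup>+x. ennreal \<bar>z - x\<bar> \<partial>piB a c) * ennreal (rr a c ^ t))"
  unfolding W1_def cost_int[symmetric]
proof (rule cINF_lower[OF _ gam_coupling])
  show "bdd_below ((\<lambda>\<gamma>. \<integral>p. \<bar>fst p - snd p\<bar> \<partial>\<gamma>) ` couplings (Pt (Suc a) (Suc c) t z) (piB a c))"
    by (rule bdd_belowI[where m=0]) auto
qed

lemma W1_exact:
  assumes "z0 = 0 \<or> z0 = 1"
  shows "W1 (Pt (Suc a) (Suc c) t z0) (piB a c) = enn2real ((\<integral>\<^sup>+x. ennreal \<bar>z0 - x\<bar> \<partial>piB a c) * ennreal (rr a c ^ t))"
proof (rule antisym[OF W1_upper_gen])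
  have eq: "(\<integral>q. \<bar>chain z0 t (snd q) - chain (fst q) t (snd q)\<bar> \<partial>Qm a c t)
      = enn2real ((\<integral>\<^sup>+x. ennreal \<bar>z0 - x\<bar> \<partial>piB a c) * ennreal (rr a c ^ t))"
    by (subst integral_eq_nn_integral) (auto simp: cost_nn)
  show "enn2real ((\<integral>\<^sup>+x. ennreal \<bar>z0 - x\<bar> \<partial>piB a c) * ennreal (rr a c ^ t)) \<le> W1 (Pt (Suc a) (Suc c) t z0) (piB a c)"
    unfolding W1_def eq[symmetric]
    apply (rule cINF_greatest)
    using gam_coupling[of a c t z0] apply blast
    by (rule coupling_lower[OF _ assms])
qed

lemma W1_le:
  assumes "0 \<le> z" "z \<le> 1"
  shows "W1 (Pt (Suc a) (Suc c) t z) (piB a c) \<le> max (mm a c) (1 - mm a c) * rr a c ^ t"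
proof -
  have "(\<integral>\<^sup>+x. ennreal \<bar>z - x\<bar> \<partial>piB a c) * ennreal (rr a c ^ t) \<le> ennreal (max (mm a c) (1 - mm a c)) * ennreal (rr a c ^ t)"
    by (rule mult_right_mono[OF Emean_le[OF assms]]) simp
  also have "\<dots> = ennreal (max (mm a c) (1 - mm a c) * rr a c ^ t)"
    using mm_bounds[of a c] rr_nonneg[of a c] by (simp add: ennreal_mult)
  finally have "enn2real ((\<integral>\<^sup>+x. ennreal \<bar>z - x\<bar> \<partial>piB a c) * ennreal (rr a c ^ t)) \<le> enn2real (ennreal (max (mm a c) (1 - mm a c) * rr a c ^ t))"
    by (rule enn2real_mono) simp
  then have "enn2real ((\<integral>\<^sup>+x. ennreal \<bar>z - x\<bar> \<partial>piB a c) * ennreal (rr a c ^ t)) \<le> max (mm a c) (1 - mm a c) * rr a c ^ t"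
    using mm_bounds[of a c] rr_nonneg[of a c] by simp
  with W1_upper_gen show ?thesis by (rule order_trans)
qed

lemma W1_attained: "\<exists>z0\<in>{0..1}. W1 (Pt (Suc a) (Suc c) t z0) (piB a c) = max (mm a c) (1 - mm a c) * rr a c ^ t"
proof (cases "1 - mm a c \<le> mm a c")
  case True
  have "W1 (Pt (Suc a) (Suc c) t 0) (piB a c) = mm a c * rr a c ^ t"
    using mm_bounds[of a c] rr_nonneg[of a c]
    by (simp add: W1_exact Emean0[simplified] ennreal_mult[symmetric])
  then show ?thesis using True by (intro bexI[of _ 0]) auto
next
  case False
  have "W1 (Pt (Suc a) (Suc c) t 1) (piB a c) = (1 - mm a c) * rr a c ^ t"
    using mm_bounds[of a c] rr_nonneg[of a c]
    by (simp add: W1_exact Emean1 ennreal_mult[symmetric])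
  then show ?thesis using False by (intro bexI[of _ 1]) auto
qed



lemma max_div: "0 < D \<Longrightarrow> max (X / D) (Y / D) = max X Y / (D::real)"
  by (cases "X \<le> Y") (simp_all add: max_def divide_right_mono divide_strict_right_mono not_le)

lemma arith_target:
  "max (mm a c) (1 - mm a c) * rr a c ^ t =
   real (max (Suc a + 1) (Suc c)) / real (Suc a + Suc c + 1)
           * (real (Suc a * Suc c) / real ((Suc a + 1) * (Suc c + 1))) ^ t"
proof -
  have 1: "1 - mm a c = real (Suc c) / real (Suc a + Suc c + 1)"
    unfolding mm_def by (simp add: field_simps)
  have 2: "mm a c = real (Suc a + 1) / real (Suc a + Suc c + 1)"
    unfolding mm_def by (simp add: field_simps)
  have 3: "max (mm a c) (1 - mm a c) = real (max (Suc a + 1) (Suc c)) / real (Suc a + Suc c + 1)"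
    unfolding 1 unfolding 2 by (subst max_div) (auto simp: of_nat_max)
  have 4: "rr a c = real (Suc a * Suc c) / real ((Suc a + 1) * (Suc c + 1))"
    unfolding rr_def by (simp add: field_simps)
  show ?thesis unfolding 3 4 ..
qed

theorem mainTheorem3:
  fixes N1 N2 t :: nat
  assumes "N1 > 0" and "N2 > 0"
  shows "(SUP z \<in> {0..1}. W1 (Pt N1 N2 t z) (beta_measure (real N1 + 1) (real N2)))
         = real (max (N1 + 1) N2) / real (N1 + N2 + 1)
           * (real (N1 * N2) / real ((N1 + 1) * (N2 + 1))) ^ t"
proof -
  obtain a where a: "N1 = Suc a" using assms(1) gr0_implies_Suc by blast
  obtain c where c: "N2 = Suc c" using assms(2) gr0_implies_Suc by blast
  have pi: "beta_measure (real (Suc a) + 1) (real (Suc c)) = piB a c" by (simp add: piB_def)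
  let ?W = "\<lambda>z. W1 (Pt (Suc a) (Suc c) t z) (piB a c)"
  have "Sup (?W ` {0..1}) = max (mm a c) (1 - mm a c) * rr a c ^ t"
  proof (rule cSup_eq_maximum)
    show "max (mm a c) (1 - mm a c) * rr a c ^ t \<in> ?W ` {0..1}"
      using W1_attained[of a c t] by (metis image_eqI)
    fix x assume "x \<in> ?W ` {0..1}"
    then show "x \<le> max (mm a c) (1 - mm a c) * rr a c ^ t" using W1_le by auto
  qed
  then show ?thesis unfolding a c pi arith_target .
qed


end
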